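(* Let $N\ge1$, let $X_1,\dots,X_N$ be the roots of the $N$-th Legendre polynomial transformed to $[0,1]$, and let $h_1,\dots,h_N$ be the associated Lagrange basis polynomials (a basis of $\mathsf{P}_{N-1}$, the real polynomials of degree at most $N-1$). Consider a closed sliding interface consisting of finitely many non-overlapping mortars $\Xi$, which together cover the interface, and finitely many cell faces on each of its two sides (left and right); each mortar is contained in exactly one left cell face and exactly one right cell face, and each cell face $\Omega$ is the union of the $m_\Omega\ge1$ mortars $\Xi_1,\dots,\Xi_{m_\Omega}$ contained in it. For each such face $\Omega$ and each of its mortars $\Xi_k$, let $s_k>0$ (with $\sum_k s_k=1$) be the ratio of the length of $\Xi_k$ to the length of $\Omega$ and $o_k=\sum_{\alpha<k}s_\alpha$, so that the face parameter $\xi\in[0,1]$ and the mortar parameter $z\in[0,1]$ are related by $\xi=o_k+s_kz$. Suppose each mortar $\Xi$ carries a single polynomial $\breve F^{\Xi}\in\mathsf{P}_{N-1}$ in $z$ (its common normal flux in mortar-space scaling), and for each cell face $\Omega$ (on either side) define $\widetilde F^{\Omega}\in\mathsf{P}_{N-1}$ in $\xi$ by $$\sum_{k=1}^{m_\Omega}\int_{o_k}^{o_k+s_k}\Big(\widetilde F^{\Omega}(\xi)-\tfrac{1}{s_k}\breve F^{\Xi_k}\big(\tfrac{\xi-o_k}{s_k}\big)\Big)h_j(\xi)\,d\xi=0\quad\text{for all }j=1,\dots,N.$$ Then for every cell face $\Omega$, $\int_0^1\widetilde F^{\Omega}(\xi)\,d\xi=\sum_{k=1}^{m_\Omega}\int_0^1\breve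 F^{\Xi_k}(z)\,dz$, and consequently $$\sum_{\Omega\ \text{left}}\int_0^1\widetilde F^{\Omega}(\xi)\,d\xi=\sum_{\Xi}\int_0^1\breve F^{\Xi}(z)\,dz=\sum_{\Omega\ \text{right}}\int_0^1\widetilde F^{\Omega}(\xi)\,d\xi,$$ i.e. the total flux on the left side of the sliding interface equals the total flux on the right side (global conservation across the interface).
   Context: This describes the back-projection of common fluxes from mortar elements to cell faces on a nonconforming sliding interface between two mesh subdomains in a high-order (flux reconstruction) discretization. The mortar-space flux $\breve F^{\Xi_k}$ is related to the computational-space flux on the mortar by $\widetilde F^{\Xi_k}=\breve F^{\Xi_k}/s_k$, which is the factor appearing in the defining relation; the same projection is used for both inviscid and viscous fluxes. *)

theory Defs
  imports "HOL-Analysis.Analysis" "HOL-Computational_Algebra.Polynomial"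
begin

text \<open>Legendre polynomials on [-1,1] via the Bonnet recurrence
  (n+1) P_(n+1) = (2n+1) x P_n - n P_(n-1).\<close>
fun legendre :: "nat \<Rightarrow> real poly" where
  "legendre 0 = 1"
| "legendre (Suc 0) = [:0, 1:]"
| "legendre (Suc (Suc n)) =
     smult (1 / real (n + 2))
       (smult (real (2 * n + 3)) ([:0, 1:] * legendre (Suc n))
        - smult (real (n + 1)) (legendre n))"

text \<open>X 1, ..., X N are the roots of the N-th Legendre polynomial transformed to [0,1]
  (xi = (x+1)/2): they are N pairwise distinct points with P_N(2 X_i - 1) = 0.
  Since P_N has degree N, these are exactly all its roots.\<close>
definition legendre_nodes01 :: "nat \<Rightarrow> (nat \<Rightarrow> real) \<Rightarrow> bool" where
  "legendre_nodes01 N X \<longleftrightarrow> inj_on X {1..N} \<and>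
     (\<forall>i\<in>{1..N}. poly (legendre N) (2 * X i - 1) = 0)"

definition lagrange_basis :: "nat \<Rightarrow> (nat \<Rightarrow> real) \<Rightarrow> nat \<Rightarrow> real poly" where
  "lagrange_basis N X j = (\<Prod>i\<in>{1..N} - {j}. smult (1 / (X j - X i)) [:- X i, 1:])"

definition face_len :: "('m \<Rightarrow> real) \<Rightarrow> 'm list \<Rightarrow> real" where
  "face_len len ms = (\<Sum>x\<leftarrow>ms. len x)"

text \<open>s_k (0-based index k): ratio of the length of the k-th mortar to the face length.\<close>
definition sk :: "('m \<Rightarrow> real) \<Rightarrow> 'm list \<Rightarrow> nat \<Rightarrow> real" where
  "sk len ms k = len (ms ! k) / face_len len ms"

definition ok :: "('m \<Rightarrow> real) \<Rightarrow> 'm list \<Rightarrow> nat \<Rightarrow> real" where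
  "ok len ms k = (\<Sum>a<k. sk len ms a)"

end

theory Submission
  imports Defs
begin


lemma cov_int:
  fixes p :: "real poly"
  assumes s: "s > 0"
  shows "integral {c..c+s} (\<lambda>\<xi>. (1/s) * poly p ((\<xi>-c)/s)) = integral {0..1} (\<lambda>z. poly p z)"
proof -
  have "(\<lambda>z. poly p z) integrable_on {0..1}"
    by (intro integrable_continuous_interval continuous_intros)
  then have H: "((\<lambda>z. poly p z) has_integral integral {0..1} (\<lambda>z. poly p z)) (cbox 0 1)"
    using integrable_integral by (simp add: cbox_interval)
  have A: "((\<lambda>x. poly p ((1/s) *\<^sub>R x + -c/s)) has_integral (integral {0..1} (\<lambda>z. poly p z) /\<^sub>R (1/s) ^ DIM(real)))
      (cbox ((0 - -c/s) /\<^sub>R (1/s)) ((1 - -c/s) /\<^sub>R (1/s)))"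
    by (rule has_integral_affinity'[OF H]) (use s in simp)
  have eq: "cbox ((0 - -c/s) /\<^sub>R (1/s)) ((1 - -c/s) /\<^sub>R (1/s)) = {c..c+s}"
    using s by (simp add: cbox_interval field_simps)
  have "((\<lambda>x. poly p ((1/s) * x + - c/s)) has_integral integral {0..1} (\<lambda>z. poly p z) * s) {c..c+s}"
    using A unfolding eq by (simp add: mult.commute)
  then have "((\<lambda>x. (1/s) * poly p ((1/s) * x + - c/s)) has_integral (1/s) * (integral {0..1} (\<lambda>z. poly p z) * s)) {c..c+s}"
    by (rule has_integral_mult_right)
  moreover have "(\<lambda>x. (1/s) * poly p ((1/s) * x + - c/s)) = (\<lambda>\<xi>. (1/s) * poly p ((\<xi>-c)/s))"
    by (simp add: diff_divide_distrib)
  moreover have "(1/s) * (integral {0..1} (\<lambda>z. poly p z) * s) = integral {0..1} (\<lambda>z. poly p z)"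
    using s by simp
  ultimately have "((\<lambda>\<xi>. (1/s) * poly p ((\<xi>-c)/s)) has_integral integral {0..1} (\<lambda>z. poly p z)) {c..c+s}"
    by metis
  then show ?thesis by (rule integral_unique)
qed

lemma lagrange_sum:
  fixes X :: "nat \<Rightarrow> real"
  assumes inj: "inj_on X {1..N}" and N: "N \<ge> 1"
  shows "(\<Sum>j\<in>{1..N}. poly (lagrange_basis N X j) x) = 1"
proof -
  let ?p = "\<Sum>j\<in>{1..N}. lagrange_basis N X j"
  have deg: "degree (lagrange_basis N X j) \<le> N - 1" if "j \<in> {1..N}" for j
  proof -
    have "degree (lagrange_basis N X j) \<le> sum (degree \<circ> (\<lambda>i. smult (1 / (X j - X i)) [:- X i, 1:])) ({1..N} - {j})"
      unfolding lagrange_basis_def by (rule degree_prod_sum_le) simp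
    also have "\<dots> \<le> sum (\<lambda>i. 1) ({1..N} - {j})"
      by (rule sum_mono) (simp add: degree_smult_le order_trans[OF degree_smult_le])
    also have "\<dots> = N - 1" using that by simp
    finally show ?thesis .
  qed
  have degp: "degree ?p \<le> N - 1"
    by (rule degree_sum_le) (use deg in auto)
  have val: "poly ?p (X i) = 1" if i: "i \<in> {1..N}" for i
  proof -
    have h0: "poly (lagrange_basis N X j) (X i) = 0" if "j \<in> {1..N}" "j \<noteq> i" for j
      unfolding lagrange_basis_def poly_prod
      by (rule prod_zero) (use i that in auto)
    have h1: "poly (lagrange_basis N X i) (X i) = 1"
      unfolding lagrange_basis_def poly_prod
    proof (rule prod.neutral, intro ballI)
      fix k assume k: "k \<in> {1..N} - {i}"
      then have "X i \<noteq> X k" using inj i by (auto dest: inj_onD)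
      then show "poly (smult (1 / (X i - X k)) [:- X k, 1:]) (X i) = 1" by (simp add: diff_divide_distrib[symmetric])
    qed
    have "poly ?p (X i) = (\<Sum>j\<in>{1..N}. poly (lagrange_basis N X j) (X i))"
      by (simp add: poly_sum)
    also have "\<dots> = (\<Sum>j\<in>{1..N}. if j = i then poly (lagrange_basis N X i) (X i) else 0)"
      by (rule sum.cong) (auto simp: h0)
    also have "\<dots> = poly (lagrange_basis N X i) (X i)"
      using i by simp
    also have "\<dots> = 1" by (rule h1)
    finally show ?thesis .
  qed
  have "?p = 1"
  proof (rule poly_eqI_degree[of "X ` {1..N}"])
    show "\<And>x. x \<in> X ` {1..N} \<Longrightarrow> poly ?p x = poly 1 x" using val by auto
    have "card (X ` {1..N}) = N" using card_image[OF inj] by simp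
    then show "degree ?p < card (X ` {1..N})" "degree (1::real poly) < card (X ` {1..N})"
      using degp N by auto
  qed
  then show ?thesis by (metis poly_1 poly_sum)
qed

lemma telescope:
  fixes f :: "real \<Rightarrow> real" and s :: "nat \<Rightarrow> real"
  assumes cont: "continuous_on UNIV f" and nn: "\<And>k. k < m \<Longrightarrow> s k \<ge> 0"
  shows "(\<Sum>k<m. integral {(\<Sum>a<k. s a) .. (\<Sum>a<k. s a) + s k} f) = integral {0..(\<Sum>a<m. s a)} f"
using nn proof (induction m)
  case 0 then show ?case by simp
next
  case (Suc m)
  have nn: "\<And>k. k < Suc m \<Longrightarrow> s k \<ge> 0" by (rule Suc.prems)
  have "0 \<le> (\<Sum>a<m. s a)" by (rule sum_nonneg) (use nn in auto)
  moreover have "f integrable_on {0..(\<Sum>a<m. s a) + s m}"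
    by (rule integrable_continuous_interval) (use cont continuous_on_subset in blast)
  ultimately have "integral {0..(\<Sum>a<m. s a)} f + integral {(\<Sum>a<m. s a)..(\<Sum>a<m. s a) + s m} f
       = integral {0..(\<Sum>a<m. s a) + s m} f"
    using nn[of m] Henstock_Kurzweil_Integration.integral_combine[where a=0 and c="sum s {..<m}" and b="sum s {..<m} + s m" and f=f] by auto
  moreover have "(\<Sum>k<m. integral {(\<Sum>a<k. s a) .. (\<Sum>a<k. s a) + s k} f) = integral {0..(\<Sum>a<m. s a)} f"
    using Suc.IH nn by auto
  ultimately show ?case by (simp add: add.commute)
qed

theorem mainTheorem2:
  fixes N :: nat
    and X :: "nat \<Rightarrow> real"
    and M :: "'m set"
    and FL FR :: "'f set"
    and lf rf :: "'m \<Rightarrow> 'f"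
    and ms :: "'f \<Rightarrow> 'm list"
    and len :: "'m \<Rightarrow> real"
    and Fb :: "'m \<Rightarrow> real poly"
    and Ft :: "'f \<Rightarrow> real poly"
  assumes N: "N \<ge> 1"
    and nodes: "legendre_nodes01 N X"
    and finM: "finite M" and finL: "finite FL" and finR: "finite FR"
    and disjLR: "FL \<inter> FR = {}"
    and len_pos: "\<forall>x\<in>M. len x > 0"
    and lf_in: "\<forall>x\<in>M. lf x \<in> FL"
    and rf_in: "\<forall>x\<in>M. rf x \<in> FR"
    and msL: "\<forall>\<Omega>\<in>FL. ms \<Omega> \<noteq> [] \<and> distinct (ms \<Omega>) \<and> set (ms \<Omega>) = {x\<in>M. lf x = \<Omega>}"
    and msR: "\<forall>\<Omega>\<in>FR. ms \<Omega> \<noteq> [] \<and> distinct (ms \<Omega>) \<and> set (ms \<Omega>) = {x\<in>M. rf x = \<Omega>}"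
    and degFb: "\<forall>x\<in>M. degree (Fb x) \<le> N - 1"
    and degFt: "\<forall>\<Omega>\<in>FL \<union> FR. degree (Ft \<Omega>) \<le> N - 1"
    and proj: "\<forall>\<Omega>\<in>FL \<union> FR. \<forall>j\<in>{1..N}.
       (\<Sum>k<length (ms \<Omega>).
          integral {ok len (ms \<Omega>) k .. ok len (ms \<Omega>) k + sk len (ms \<Omega>) k}
            (\<lambda>\<xi>. (poly (Ft \<Omega>) \<xi>
                  - (1 / sk len (ms \<Omega>) k) *
                    poly (Fb (ms \<Omega> ! k)) ((\<xi> - ok len (ms \<Omega>) k) / sk len (ms \<Omega>) k))
                 * poly (lagrange_basis N X j) \<xi>)) = 0"
  shows "(\<forall>\<Omega>\<in>FL \<union> FR. integral {0..1} (\<lambda>\<xi>. poly (Ft \<Omega>) \<xi>)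
            = (\<Sum>k<length (ms \<Omega>). integral {0..1} (\<lambda>z. poly (Fb (ms \<Omega> ! k)) z)))
     \<and> (\<Sum>\<Omega>\<in>FL. integral {0..1} (\<lambda>\<xi>. poly (Ft \<Omega>) \<xi>))
         = (\<Sum>x\<in>M. integral {0..1} (\<lambda>z. poly (Fb x) z))
     \<and> (\<Sum>x\<in>M. integral {0..1} (\<lambda>z. poly (Fb x) z))
         = (\<Sum>\<Omega>\<in>FR. integral {0..1} (\<lambda>\<xi>. poly (Ft \<Omega>) \<xi>))"
proof -
  have inj: "inj_on X {1..N}" using nodes unfolding legendre_nodes01_def by blast
  have intg: "(\<lambda>\<xi>. (poly P \<xi> - (1/s) * poly Q ((\<xi>-c)/s)) * poly H \<xi>) integrable_on {a..b}"
    if "s > 0" for P Q H :: "real poly" and s c a b :: real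
    by (intro integrable_continuous_interval continuous_intros) (use that in auto)
  have intg2: "(\<lambda>\<xi>. poly P \<xi> - (1/s) * poly Q ((\<xi>-c)/s)) integrable_on {a..b}"
    if "s > 0" for P Q :: "real poly" and s c a b :: real
    by (intro integrable_continuous_interval continuous_intros) (use that in auto)
  have intg3: "(\<lambda>\<xi>. (1/s) * poly Q ((\<xi>-c)/s)) integrable_on {a..b}"
    if "s > 0" for Q :: "real poly" and s c a b :: real
    by (intro integrable_continuous_interval continuous_intros) (use that in auto)
  have intg4: "(\<lambda>\<xi>. poly Q \<xi>) integrable_on {a..b}"
    for Q :: "real poly" and a b :: real
    by (rule integrable_continuous_interval) (intro continuous_intros)
  have face: "integral {0..1} (\<lambda>\<xi>. poly (Ft \<Omega>) \<xi>)
            = (\<Sum>k<length (ms \<Omega>). integral {0..1} (\<lambda>z. poly (Fb (ms \<Omega> ! k)) z))"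
    if \<Omega>: "\<Omega> \<in> FL \<union> FR" for \<Omega>
  proof -
    define L where "L = ms \<Omega>"
    define s where "s = sk len L"
    define c where "c = ok len L"
    define g where "g = (\<lambda>k \<xi>. (1 / s k) * poly (Fb (L ! k)) ((\<xi> - c k) / s k))"
    define F where "F = (\<lambda>\<xi>. poly (Ft \<Omega>) \<xi>)"
    define h where "h = (\<lambda>j \<xi>. poly (lagrange_basis N X j) \<xi>)"
    have Lne: "L \<noteq> []" and LM: "set L \<subseteq> M" using \<Omega> msL msR unfolding L_def by auto
    have lpos: "len (L ! k) > 0" if "k < length L" for k
      using len_pos LM that nth_mem by blast
    have fl: "face_len len L = (\<Sum>a<length L. len (L ! a))"
      unfolding face_len_def by (simp add: sum_list_sum_nth atLeast0LessThan)
    have flpos: "face_len len L > 0" unfolding fl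
      using Lne lpos by (intro sum_pos) auto
    have spos: "s k > 0" if "k < length L" for k
      unfolding s_def sk_def using lpos[OF that] flpos by simp
    have c_def': "c k = (\<Sum>a<k. s a)" for k unfolding c_def s_def ok_def by simp
    have c1: "c (length L) = 1"
      unfolding c_def' s_def sk_def using flpos by (simp add: sum_divide_distrib[symmetric] fl)
    have I1: "(\<lambda>\<xi>. (F \<xi> - g k \<xi>) * h j \<xi>) integrable_on {c k..c k + s k}" if "k < length L" for k j
      unfolding F_def g_def h_def by (rule intg[OF spos[OF that]])
    have I2: "g k integrable_on {c k..c k + s k}" if "k < length L" for k
      unfolding g_def by (rule intg3[OF spos[OF that]])
    have I3: "F integrable_on {a..b}" for a b
      unfolding F_def by (rule intg4)
    have LS: "(\<Sum>j\<in>{1..N}. h j \<xi>) = 1" for \<xi>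
      unfolding h_def by (rule lagrange_sum[OF inj N])
    have P: "(\<Sum>k<length L. integral {c k .. c k + s k} (\<lambda>\<xi>. (F \<xi> - g k \<xi>) * h j \<xi>)) = 0"
      if "j \<in> {1..N}" for j
      using proj \<Omega> that unfolding L_def s_def c_def g_def F_def h_def by auto
    have "0 = (\<Sum>j\<in>{1..N}. \<Sum>k<length L. integral {c k .. c k + s k} (\<lambda>\<xi>. (F \<xi> - g k \<xi>) * h j \<xi>))"
      using P by simp
    also have "\<dots> = (\<Sum>k<length L. \<Sum>j\<in>{1..N}. integral {c k .. c k + s k} (\<lambda>\<xi>. (F \<xi> - g k \<xi>) * h j \<xi>))"
      by (rule sum.swap)
    also have "\<dots> = (\<Sum>k<length L. integral {c k .. c k + s k} (\<lambda>\<xi>. \<Sum>j\<in>{1..N}. (F \<xi> - g k \<xi>) * h j \<xi>))"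
      by (rule sum.cong[OF refl], rule integral_sum[symmetric]) (auto intro: I1)
    also have "\<dots> = (\<Sum>k<length L. integral {c k .. c k + s k} (\<lambda>\<xi>. F \<xi> - g k \<xi>))"
      by (simp only: sum_distrib_left[symmetric] LS mult_1_right)
    also have "\<dots> = (\<Sum>k<length L. integral {c k .. c k + s k} F - integral {c k .. c k + s k} (g k))"
      by (rule sum.cong[OF refl], rule integral_diff) (auto intro: I2 I3)
    also have "\<dots> = (\<Sum>k<length L. integral {c k .. c k + s k} F) - (\<Sum>k<length L. integral {c k .. c k + s k} (g k))"
      by (simp add: sum_subtractf)
    also have "(\<Sum>k<length L. integral {c k .. c k + s k} F) = integral {0..1} F"
    proof -
      have "continuous_on UNIV F" unfolding F_def by (intro continuous_intros)
      then show ?thesis using telescope[of F "length L" s] spos c1 unfolding c_def'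
        by (auto intro: less_imp_le)
    qed
    also have "(\<Sum>k<length L. integral {c k .. c k + s k} (g k)) = (\<Sum>k<length L. integral {0..1} (\<lambda>z. poly (Fb (L ! k)) z))"
      unfolding g_def by (rule sum.cong[OF refl], rule cov_int, rule spos, simp)
    finally show ?thesis unfolding F_def L_def by simp
  qed
  define G where "G = (\<lambda>x. integral {0..1} (\<lambda>z. poly (Fb x) z))"
  have lst: "(\<Sum>k<length (ms \<Omega>). G (ms \<Omega> ! k)) = sum G (set (ms \<Omega>))" if "distinct (ms \<Omega>)" for \<Omega>
  proof -
    have "(\<Sum>k<length (ms \<Omega>). G (ms \<Omega> ! k)) = sum_list (map G (ms \<Omega>))"
      by (simp add: sum_list_sum_nth atLeast0LessThan)
    also have "\<dots> = sum G (set (ms \<Omega>))" using that by (rule sum_list_distinct_conv_sum_set)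
    finally show ?thesis .
  qed
  have L: "(\<Sum>\<Omega>\<in>FL. integral {0..1} (\<lambda>\<xi>. poly (Ft \<Omega>) \<xi>)) = (\<Sum>x\<in>M. G x)"
  proof -
    have "(\<Sum>\<Omega>\<in>FL. integral {0..1} (\<lambda>\<xi>. poly (Ft \<Omega>) \<xi>)) = (\<Sum>\<Omega>\<in>FL. sum G {x\<in>M. lf x = \<Omega>})"
      by (rule sum.cong[OF refl]) (use face msL lst in \<open>auto simp: G_def\<close>)
    also have "\<dots> = sum G M" by (rule sum.group) (use finM finL lf_in in auto)
    finally show ?thesis .
  qed
  have R: "(\<Sum>\<Omega>\<in>FR. integral {0..1} (\<lambda>\<xi>. poly (Ft \<Omega>) \<xi>)) = (\<Sum>x\<in>M. G x)"
  proof -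
    have "(\<Sum>\<Omega>\<in>FR. integral {0..1} (\<lambda>\<xi>. poly (Ft \<Omega>) \<xi>)) = (\<Sum>\<Omega>\<in>FR. sum G {x\<in>M. rf x = \<Omega>})"
      by (rule sum.cong[OF refl]) (use face msR lst in \<open>auto simp: G_def\<close>)
    also have "\<dots> = sum G M" by (rule sum.group) (use finM finR rf_in in auto)
    finally show ?thesis .
  qed
  show ?thesis using face L R unfolding G_def by auto
qed

end
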